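(* Let $R_e\approx1.4877$ be the unique positive root of $\frac{10}{7(R+1)}-\frac{R^2\sqrt{R}}{R^2+R+1}=0$. Then for all $0<x,y,z<R_e$, $$-\tfrac{10}{7}\sqrt{y}\,d_1(y,z)-\sqrt{yz}\,d_2(y,z)-\sqrt{xy}\,d_2(x,y)>0 .$$
   Context: For $x,y\ge0$: $d_1(x,y)=-\frac{x}{1+x}-\frac{xy}{1+y+xy}-\frac{xy^2}{1+y+xy}\frac{1+x}{1+y}$ and $d_2(x,y)=\frac{xy^2}{1+y+xy}\frac{1+x}{1+y}$. *)

theory Defs
  imports Complex_Main
begin

definition d1 :: "real \<Rightarrow> real \<Rightarrow> real" where
  "d1 x y = - x / (1 + x) - x * y / (1 + y + x * y)
            - (x * y^2 / (1 + y + x * y)) * ((1 + x) / (1 + y))"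

definition d2 :: "real \<Rightarrow> real \<Rightarrow> real" where
  "d2 x y = (x * y^2 / (1 + y + x * y)) * ((1 + x) / (1 + y))"

definition Re_poly :: "real \<Rightarrow> real" where
  "Re_poly R = 10 / (7 * (R + 1)) - R^2 * sqrt R / (R^2 + R + 1)"

definition R_e :: real where
  "R_e = (THE R. R > 0 \<and> Re_poly R = 0)"

end

theory Submission
  imports Defs
begin

lemma g_mono:
  fixes a b :: real
  assumes "0 < a" "a < b"
  shows "a^2 * sqrt a / (a^2 + a + 1) < b^2 * sqrt b / (b^2 + b + 1)"
proof -
  have sa: "0 < sqrt a" "sqrt a < sqrt b" using assms by auto
  have p1: "a^2*b^2*sqrt a < a^2*b^2*sqrt b" using sa assms by simp
  have q: "a * sqrt a < b * sqrt b" using sa assms by (intro mult_strict_mono) auto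
  have p2: "a*b*(a * sqrt a) < a*b*(b * sqrt b)" using q assms by simp
  have q2: "a^2 < b^2" using assms by (simp add: power_strict_mono)
  have p3: "a^2 * sqrt a < b^2 * sqrt b" using q2 sa assms by (intro mult_strict_mono) auto
  have "a^2 * sqrt a * (b^2 + b + 1) < b^2 * sqrt b * (a^2 + a + 1)"
    using p1 p2 p3 by (simp add: algebra_simps power2_eq_square)
  moreover have "0 < a^2+a+1" "0 < b^2+b+1" using assms zero_le_power2[of a] zero_le_power2[of b] by linarith+
  ultimately show ?thesis by (simp add: divide_simps)
qed

lemma Re_poly_decr:
  assumes "0 < a" "a < b"
  shows "Re_poly b < Re_poly a"
proof -
  have "10 / (7 * (b + 1)) < 10 / (7 * (a + 1))" using assms by (simp add: divide_simps)
  thus ?thesis using g_mono[OF assms] unfolding Re_poly_def by linarith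
qed

lemma Re_poly_1: "Re_poly 1 > 0" unfolding Re_poly_def by simp

lemma Re_poly_2: "Re_poly 2 < 0"
proof -
  have "sqrt 2 > (5/6::real)" by (rule real_less_rsqrt) (simp add: power2_eq_square)
  thus ?thesis unfolding Re_poly_def by simp
qed

lemma Re_cont: "continuous_on {1..2} Re_poly"
proof -
  have h: "x^2 + x + 1 \<noteq> 0" "x + 1 \<noteq> 0" if "x \<in> {1..2::real}" for x
  proof -
    have "0 \<le> x^2" "1 \<le> x" using that by auto
    thus "x^2 + x + 1 \<noteq> 0" "x + 1 \<noteq> 0" by linarith+
  qed
  show ?thesis unfolding Re_poly_def
    by (intro continuous_intros) (metis h mult_eq_0_iff zero_neq_numeral)+
qed

lemma R_e_props: "0 < R_e \<and> Re_poly R_e = 0 \<and> R_e < 2"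
proof -
  obtain r where r: "1 \<le> r" "r \<le> 2" "Re_poly r = 0"
    using IVT2'[of Re_poly 2 0 1] Re_poly_1 Re_poly_2 Re_cont by force
  have r2: "r < 2" using r Re_poly_2 by (cases "r = 2") auto
  have uniq: "R = r" if "R > 0" "Re_poly R = 0" for R
  proof (rule ccontr)
    assume "R \<noteq> r"
    then have "R < r \<or> r < R" by auto
    then show False using Re_poly_decr[of R r] Re_poly_decr[of r R] that r by auto
  qed
  have "R_e = r" unfolding R_e_def
    by (rule the_equality) (use r uniq in auto)
  thus ?thesis using r r2 by simp
qed

lemma key:
  fixes x y R :: real
  assumes "0 < x" "x < R" "0 < y" "y < R"
    and eq: "10/7 = R^2 * sqrt R * (R+1) / (R^2+R+1)"
  shows "sqrt x * (x * (1+x) * y / (1 + y + x*y)) < 10/7"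
proof -
  have R0: "0 < R" using assms by simp
  have s1: "y / (1+y+x*y) < R / (1+R+x*R)"
  proof -
    have "y * (1+R+x*R) < R * (1+y+x*y)" using assms by (simp add: algebra_simps)
    moreover have "0 < 1+y+x*y" "0 < 1+R+x*R" using assms R0 by (auto intro: add_pos_pos)
    ultimately show ?thesis by (simp add: divide_simps)
  qed
  have s2: "(1+x)/(1+R+x*R) \<le> (1+R)/(1+R+R*R)"
  proof -
    have "(1+x)*(1+R+R*R) \<le> (1+R)*(1+R+x*R)" using assms by (simp add: algebra_simps)
    moreover have "0 < 1+R+R*R" "0 < 1+R+x*R" using assms R0 by (auto intro: add_pos_pos)
    ultimately show ?thesis by (simp add: divide_simps)
  qed
  have s3: "x * sqrt x < R * sqrt R" using assms by (intro mult_strict_mono) auto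
  have xs: "0 < x * sqrt x" using assms by simp
  have "sqrt x * (x * (1+x) * y / (1 + y + x*y)) = (x * sqrt x) * (1+x) * (y / (1+y+x*y))"
    by simp
  also have "\<dots> < (x * sqrt x) * (1+x) * (R / (1+R+x*R))"
    using mult_strict_left_mono[OF s1, of "x * sqrt x * (1+x)"] xs assms by simp
  also have "\<dots> = (x * sqrt x) * R * ((1+x)/(1+R+x*R))" by simp
  also have "\<dots> \<le> (x * sqrt x) * R * ((1+R)/(1+R+R*R))"
    using s2 xs R0 by (intro mult_left_mono) auto
  also have "\<dots> \<le> (R * sqrt R) * R * ((1+R)/(1+R+R*R))"
    using s3 R0 by (intro mult_right_mono) (auto intro: divide_nonneg_pos add_pos_pos)
  also have "\<dots> = 10/7" unfolding eq by (simp add: power2_eq_square algebra_simps)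
  finally show ?thesis .
qed

theorem lemmaA1:
  fixes x y z :: real
  assumes "0 < x" "x < R_e" "0 < y" "y < R_e" "0 < z" "z < R_e"
  shows "- (10/7) * sqrt y * d1 y z - sqrt (y * z) * d2 y z - sqrt (x * y) * d2 x y > 0"
proof -
  let ?R = R_e
  have P: "0 < ?R" "Re_poly ?R = 0" "?R < 2" using R_e_props by auto
  have den: "0 < ?R^2 + ?R + 1" using P zero_le_power2[of ?R] by linarith
  have eq: "10/7 = ?R^2 * sqrt ?R * (?R+1) / (?R^2+?R+1)"
    using P(2) P(1) den unfolding Re_poly_def by (simp add: divide_simps)
  have K: "sqrt x * (x * (1+x) * y / (1 + y + x*y)) < 10/7"
    using key[OF assms(1,2,3,4) eq] .
  have d2xy: "d2 x y = (x * (1+x) * y / (1 + y + x*y)) * (y / (1+y))"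
    unfolding d2_def by (simp add: power2_eq_square)
  have yy: "0 < y/(1+y)" using assms by simp
  have A: "sqrt x * d2 x y < 10/7 * (y/(1+y))"
    unfolding d2xy using mult_strict_right_mono[OF K yy] by (simp add: mult.assoc)
  have sz: "sqrt z < 10/7"
  proof -
    have "z < (10/7)^2" using P assms by (simp add: power2_eq_square)
    hence "sqrt z < sqrt ((10/7)^2)" by (rule real_sqrt_less_mono)
    thus ?thesis by simp
  qed
  have d2p: "0 < d2 y z" unfolding d2_def using assms by (auto intro!: divide_pos_pos mult_pos_pos add_pos_pos)
  have t2: "0 < y*z/(1+z+y*z)" using assms by (auto intro!: divide_pos_pos mult_pos_pos add_pos_pos)
  have d1e: "- d1 y z = y/(1+y) + y*z/(1+z+y*z) + d2 y z" unfolding d1_def d2_def by simp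
  have inner: "0 < 10/7 * (y/(1+y) + y*z/(1+z+y*z) + d2 y z) - sqrt z * d2 y z - sqrt x * d2 x y"
  proof -
    have "0 < (10/7 - sqrt z) * d2 y z" using sz d2p by simp
    moreover have "10/7 * (y/(1+y) + y*z/(1+z+y*z) + d2 y z) - sqrt z * d2 y z - sqrt x * d2 x y
      = (10/7 * (y/(1+y)) - sqrt x * d2 x y) + 10/7 * (y*z/(1+z+y*z)) + (10/7 - sqrt z) * d2 y z"
      by (simp add: algebra_simps)
    ultimately show ?thesis using A t2 by linarith
  qed
  have "- (10/7) * sqrt y * d1 y z - sqrt (y * z) * d2 y z - sqrt (x * y) * d2 x y
      = sqrt y * (10/7 * (- d1 y z) - sqrt z * d2 y z - sqrt x * d2 x y)"
    by (simp add: real_sqrt_mult algebra_simps)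
  also have "\<dots> = sqrt y * (10/7 * (y/(1+y) + y*z/(1+z+y*z) + d2 y z) - sqrt z * d2 y z - sqrt x * d2 x y)"
    by (simp only: d1e)
  also have "\<dots> > 0" using inner assms by simp
  finally show ?thesis .
qed

end
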